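(* Let $\tau=(G,H,\eta,T)$ be folding data for a symmetric monoidal category $\mathcal{C}$ with strict $G$-action $\phi$ by strict monoidal autofunctors. Then for each $g\in G$ and each object $A$ of $\hat{\mathcal{C}}_{H,\eta}$ there is an isomorphism $\alpha_A^g:\phi_g(\mathrm{Fold}_\tau A)\to\mathrm{Fold}_\tau A$ in $\mathcal{C}$, namely $\alpha_A^g=\rho_A^g\circ\sigma_A^g$ where $\sigma_A^g$ is a composite of symmetry isomorphisms reordering tensor factors and $\rho_A^g=\bigotimes_{t\in T}\phi_t((\eta_A^{h_t})^{-1})$ for suitable $h_t\in H$, such that for every morphism $f:A\to B$ of $\hat{\mathcal{C}}_{H,\eta}$, $$\alpha_B^g\circ\phi_g(\mathrm{Fold}_\tau f)\circ(\alpha_A^g)^{-1}=\mathrm{Fold}_\tau f.$$ In other words, each $\phi_g$, applied to the folded category $\mathrm{FLD}_\tau(\mathcal{C})$, is naturally isomorphic to the identity on $\mathrm{FLD}_\tau(\mathcal{C})$.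
   Context: Setup: $\mathcal{C}$ is a symmetric monoidal category, $G$ a finite group, $\phi:G\to\mathrm{Aut}(\mathcal{C})$ a strict left action ($\phi_g\phi_h=\phi_{gh}$, $\phi_e=\mathrm{id}$) by strict monoidal autofunctors. For $H\le G$, $\eta=(\eta_A^h)$ is a family of isomorphisms $\eta_A^h:A\to\phi_hA$ ($A\in\mathrm{ob}\,\mathcal{C}$, $h\in H$) with $\phi_h(\eta_A^{h'})\circ\eta_A^h=\eta_A^{hh'}$ and $\eta^h_{A\otimes B}=\eta^h_A\otimes\eta^h_B$. $\hat{\mathcal{C}}_{H,\eta}$ is the category with objects the pairs $(A,(\eta_A^h)_{h\in H})$ and morphisms those $f:A\to B$ of $\mathcal{C}$ with $\phi_h(f)\circ\eta_A^h=\eta_B^h\circ f$ for all $h\in H$. Folding data is $\tau=(G,H,\eta,T)$ with $T$ a left transversal of $H$ in $G$ (one representative of each left coset $tH$), with a fixed ordering. The folding functor $\mathrm{Fold}_\tau:\hat{\mathcal{C}}_{H,\eta}\to\mathcal{C}$ sends $A\mapsto\bigotimes_{t\in T}\phi_tA$ and $f\mapsto\bigotimes_{t\in T}\phi_tf$. The folded category $\mathrm{FLD}_\tau(\mathcal{C})$ is the image subcategory of $\mathcal{C}$. For $g\in G$, $gT$ is another left transversal, and $h_t\in H$ is defined by: the representative of the coset $tH$ in $gT$ is $th_t$. *)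

theory Defs
  imports "HOL-Algebra.Coset"
begin

text \<open>A category with a tensor product. Composition convention: cp C g f = g o f.\<close>

record ('o, 'm) smcat =
  ob  :: "'o set"
  ar  :: "'m set"
  dm  :: "'m \<Rightarrow> 'o"
  cd  :: "'m \<Rightarrow> 'o"
  cp  :: "'m \<Rightarrow> 'm \<Rightarrow> 'm"
  idm :: "'o \<Rightarrow> 'm"
  tob :: "'o \<Rightarrow> 'o \<Rightarrow> 'o"
  tar :: "'m \<Rightarrow> 'm \<Rightarrow> 'm"
  unt :: "'o"
  asc :: "'o \<Rightarrow> 'o \<Rightarrow> 'o \<Rightarrow> 'm"
  lu  :: "'o \<Rightarrow> 'm"
  ru  :: "'o \<Rightarrow> 'm"
  sy  :: "'o \<Rightarrow> 'o \<Rightarrow> 'm"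

definition hom :: "('o, 'm, 'x) smcat_scheme \<Rightarrow> 'o \<Rightarrow> 'o \<Rightarrow> 'm set" where
  "hom C A B = {f \<in> ar C. dm C f = A \<and> cd C f = B}"

definition is_inv :: "('o, 'm, 'x) smcat_scheme \<Rightarrow> 'm \<Rightarrow> 'm \<Rightarrow> bool" where
  "is_inv C f g \<longleftrightarrow> f \<in> ar C \<and> g \<in> ar C \<and> dm C g = cd C f \<and> cd C g = dm C f
     \<and> cp C g f = idm C (dm C f) \<and> cp C f g = idm C (cd C f)"

definition iso_arr :: "('o, 'm, 'x) smcat_scheme \<Rightarrow> 'm \<Rightarrow> bool" where
  "iso_arr C f \<longleftrightarrow> (\<exists>g. is_inv C f g)"

definition inv_arr :: "('o, 'm, 'x) smcat_scheme \<Rightarrow> 'm \<Rightarrow> 'm" where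
  "inv_arr C f = (THE g. is_inv C f g)"

definition category :: "('o, 'm, 'x) smcat_scheme \<Rightarrow> bool" where
  "category C \<longleftrightarrow>
     (\<forall>f \<in> ar C. dm C f \<in> ob C \<and> cd C f \<in> ob C)
   \<and> (\<forall>A \<in> ob C. idm C A \<in> hom C A A)
   \<and> (\<forall>f \<in> ar C. \<forall>g \<in> ar C. cd C f = dm C g \<longrightarrow>
        cp C g f \<in> hom C (dm C f) (cd C g))
   \<and> (\<forall>f \<in> ar C. cp C f (idm C (dm C f)) = f \<and> cp C (idm C (cd C f)) f = f)
   \<and> (\<forall>f \<in> ar C. \<forall>g \<in> ar C. \<forall>h \<in> ar C. cd C f = dm C g \<longrightarrow> cd C g = dm C h \<longrightarrow>
        cp C h (cp C g f) = cp C (cp C h g) f)"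

definition monoidal_cat :: "('o, 'm, 'x) smcat_scheme \<Rightarrow> bool" where
  "monoidal_cat C \<longleftrightarrow> category C
   \<and> unt C \<in> ob C
   \<and> (\<forall>A \<in> ob C. \<forall>B \<in> ob C. tob C A B \<in> ob C)
   \<and> (\<forall>f \<in> ar C. \<forall>g \<in> ar C.
        tar C f g \<in> hom C (tob C (dm C f) (dm C g)) (tob C (cd C f) (cd C g)))
   \<and> (\<forall>A \<in> ob C. \<forall>B \<in> ob C. tar C (idm C A) (idm C B) = idm C (tob C A B))
   \<and> (\<forall>f \<in> ar C. \<forall>g \<in> ar C. \<forall>f' \<in> ar C. \<forall>g' \<in> ar C.
        cd C f = dm C g \<longrightarrow> cd C f' = dm C g' \<longrightarrow>
        tar C (cp C g f) (cp C g' f') = cp C (tar C g g') (tar C f f'))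
   \<comment> \<open>associator, unitors: isomorphisms\<close>
   \<and> (\<forall>A \<in> ob C. \<forall>B \<in> ob C. \<forall>D \<in> ob C.
        asc C A B D \<in> hom C (tob C (tob C A B) D) (tob C A (tob C B D)) \<and> iso_arr C (asc C A B D))
   \<and> (\<forall>A \<in> ob C. lu C A \<in> hom C (tob C (unt C) A) A \<and> iso_arr C (lu C A))
   \<and> (\<forall>A \<in> ob C. ru C A \<in> hom C (tob C A (unt C)) A \<and> iso_arr C (ru C A))
   \<comment> \<open>naturality\<close>
   \<and> (\<forall>f \<in> ar C. \<forall>g \<in> ar C. \<forall>h \<in> ar C.
        cp C (asc C (cd C f) (cd C g) (cd C h)) (tar C (tar C f g) h)
        = cp C (tar C f (tar C g h)) (asc C (dm C f) (dm C g) (dm C h)))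
   \<and> (\<forall>f \<in> ar C. cp C (lu C (cd C f)) (tar C (idm C (unt C)) f) = cp C f (lu C (dm C f)))
   \<and> (\<forall>f \<in> ar C. cp C (ru C (cd C f)) (tar C f (idm C (unt C))) = cp C f (ru C (dm C f)))
   \<comment> \<open>pentagon and triangle\<close>
   \<and> (\<forall>A \<in> ob C. \<forall>B \<in> ob C. \<forall>D \<in> ob C. \<forall>E \<in> ob C.
        cp C (tar C (idm C A) (asc C B D E))
          (cp C (asc C A (tob C B D) E) (tar C (asc C A B D) (idm C E)))
        = cp C (asc C A B (tob C D E)) (asc C (tob C A B) D E))
   \<and> (\<forall>A \<in> ob C. \<forall>B \<in> ob C.
        cp C (tar C (idm C A) (lu C B)) (asc C A (unt C) B) = tar C (ru C A) (idm C B))"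

definition sym_monoidal_cat :: "('o, 'm, 'x) smcat_scheme \<Rightarrow> bool" where
  "sym_monoidal_cat C \<longleftrightarrow> monoidal_cat C
   \<and> (\<forall>A \<in> ob C. \<forall>B \<in> ob C. sy C A B \<in> hom C (tob C A B) (tob C B A))
   \<and> (\<forall>f \<in> ar C. \<forall>g \<in> ar C.
        cp C (sy C (cd C f) (cd C g)) (tar C f g) = cp C (tar C g f) (sy C (dm C f) (dm C g)))
   \<and> (\<forall>A \<in> ob C. \<forall>B \<in> ob C. cp C (sy C B A) (sy C A B) = idm C (tob C A B))
   \<comment> \<open>hexagon\<close>
   \<and> (\<forall>A \<in> ob C. \<forall>B \<in> ob C. \<forall>D \<in> ob C.
        cp C (asc C B D A) (cp C (sy C A (tob C B D)) (asc C A B D))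
        = cp C (tar C (idm C B) (sy C A D)) (cp C (asc C B A D) (tar C (sy C A B) (idm C D))))"

definition functor_on :: "('o, 'm, 'x) smcat_scheme \<Rightarrow> ('o \<Rightarrow> 'o) \<Rightarrow> ('m \<Rightarrow> 'm) \<Rightarrow> bool" where
  "functor_on C FO FM \<longleftrightarrow>
     (\<forall>A \<in> ob C. FO A \<in> ob C)
   \<and> (\<forall>f \<in> ar C. FM f \<in> hom C (FO (dm C f)) (FO (cd C f)))
   \<and> (\<forall>A \<in> ob C. FM (idm C A) = idm C (FO A))
   \<and> (\<forall>f \<in> ar C. \<forall>g \<in> ar C. cd C f = dm C g \<longrightarrow> FM (cp C g f) = cp C (FM g) (FM f))"

definition strict_monoidal_autofunctor ::
  "('o, 'm, 'x) smcat_scheme \<Rightarrow> ('o \<Rightarrow> 'o) \<Rightarrow> ('m \<Rightarrow> 'm) \<Rightarrow> bool" where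
  "strict_monoidal_autofunctor C FO FM \<longleftrightarrow> functor_on C FO FM
   \<and> bij_betw FO (ob C) (ob C) \<and> bij_betw FM (ar C) (ar C)
   \<and> FO (unt C) = unt C
   \<and> (\<forall>A \<in> ob C. \<forall>B \<in> ob C. FO (tob C A B) = tob C (FO A) (FO B))
   \<and> (\<forall>f \<in> ar C. \<forall>g \<in> ar C. FM (tar C f g) = tar C (FM f) (FM g))
   \<and> (\<forall>A \<in> ob C. \<forall>B \<in> ob C. \<forall>D \<in> ob C. FM (asc C A B D) = asc C (FO A) (FO B) (FO D))
   \<and> (\<forall>A \<in> ob C. FM (lu C A) = lu C (FO A) \<and> FM (ru C A) = ru C (FO A))"

definition strict_action ::
  "('o, 'm, 'x) smcat_scheme \<Rightarrow> ('g, 'b) monoid_scheme \<Rightarrow>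
   ('g \<Rightarrow> 'o \<Rightarrow> 'o) \<Rightarrow> ('g \<Rightarrow> 'm \<Rightarrow> 'm) \<Rightarrow> bool" where
  "strict_action C G phiO phiM \<longleftrightarrow>
     (\<forall>g \<in> carrier G. strict_monoidal_autofunctor C (phiO g) (phiM g))
   \<and> (\<forall>g \<in> carrier G. \<forall>h \<in> carrier G. \<forall>A \<in> ob C. phiO g (phiO h A) = phiO (g \<otimes>\<^bsub>G\<^esub> h) A)
   \<and> (\<forall>g \<in> carrier G. \<forall>h \<in> carrier G. \<forall>f \<in> ar C. phiM g (phiM h f) = phiM (g \<otimes>\<^bsub>G\<^esub> h) f)
   \<and> (\<forall>A \<in> ob C. phiO \<one>\<^bsub>G\<^esub> A = A)
   \<and> (\<forall>f \<in> ar C. phiM \<one>\<^bsub>G\<^esub> f = f)"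

definition eta_data ::
  "('o, 'm, 'x) smcat_scheme \<Rightarrow> ('g, 'b) monoid_scheme \<Rightarrow> 'g set \<Rightarrow>
   ('g \<Rightarrow> 'o \<Rightarrow> 'o) \<Rightarrow> ('g \<Rightarrow> 'm \<Rightarrow> 'm) \<Rightarrow> ('g \<Rightarrow> 'o \<Rightarrow> 'm) \<Rightarrow> bool" where
  "eta_data C G H phiO phiM eta \<longleftrightarrow>
     (\<forall>h \<in> H. \<forall>A \<in> ob C. eta h A \<in> hom C A (phiO h A) \<and> iso_arr C (eta h A))
   \<and> (\<forall>h \<in> H. \<forall>h' \<in> H. \<forall>A \<in> ob C.
        cp C (phiM h (eta h' A)) (eta h A) = eta (h \<otimes>\<^bsub>G\<^esub> h') A)
   \<and> (\<forall>h \<in> H. \<forall>A \<in> ob C. \<forall>B \<in> ob C. eta h (tob C A B) = tar C (eta h A) (eta h B))"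

text \<open>Morphisms of C-hat from A to B (objects of C-hat are the objects of C
  equipped with the fixed family eta).\<close>
definition hat_hom ::
  "('o, 'm, 'x) smcat_scheme \<Rightarrow> 'g set \<Rightarrow> ('g \<Rightarrow> 'o \<Rightarrow> 'o) \<Rightarrow> ('g \<Rightarrow> 'm \<Rightarrow> 'm) \<Rightarrow>
   ('g \<Rightarrow> 'o \<Rightarrow> 'm) \<Rightarrow> 'o \<Rightarrow> 'o \<Rightarrow> 'm set" where
  "hat_hom C H phiO phiM eta A B =
     {f \<in> hom C A B. \<forall>h \<in> H. cp C (phiM h f) (eta h A) = cp C (eta h B) f}"

definition left_transversal :: "('g, 'b) monoid_scheme \<Rightarrow> 'g set \<Rightarrow> 'g list \<Rightarrow> bool" where
  "left_transversal G H ts \<longleftrightarrow> distinct ts \<and> set ts \<subseteq> carrier G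
     \<and> (\<forall>g \<in> carrier G. \<exists>!t. t \<in> set ts \<and> g \<in> t <#\<^bsub>G\<^esub> H)"

fun tens_obs :: "('o, 'm, 'x) smcat_scheme \<Rightarrow> 'o list \<Rightarrow> 'o" where
  "tens_obs C [] = unt C"
| "tens_obs C [A] = A"
| "tens_obs C (A # B # As) = tob C A (tens_obs C (B # As))"

fun tens_ars :: "('o, 'm, 'x) smcat_scheme \<Rightarrow> 'm list \<Rightarrow> 'm" where
  "tens_ars C [] = idm C (unt C)"
| "tens_ars C [f] = f"
| "tens_ars C (f # g # fs) = tar C f (tens_ars C (g # fs))"

definition fold_obj :: "('o, 'm, 'x) smcat_scheme \<Rightarrow> ('g \<Rightarrow> 'o \<Rightarrow> 'o) \<Rightarrow> 'g list \<Rightarrow> 'o \<Rightarrow> 'o" where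
  "fold_obj C phiO ts A = tens_obs C (map (\<lambda>t. phiO t A) ts)"

definition fold_arr :: "('o, 'm, 'x) smcat_scheme \<Rightarrow> ('g \<Rightarrow> 'm \<Rightarrow> 'm) \<Rightarrow> 'g list \<Rightarrow> 'm \<Rightarrow> 'm" where
  "fold_arr C phiM ts f = tens_ars C (map (\<lambda>t. phiM t f) ts)"

text \<open>Arrows built from symmetries (and the associators/unitors needed to
  rebracket) by tensoring and composing: "composites of symmetry isomorphisms
  reordering tensor factors".\<close>
inductive_set struct_arrs :: "('o, 'm, 'x) smcat_scheme \<Rightarrow> 'm set" for C where
  s_id:   "A \<in> ob C \<Longrightarrow> idm C A \<in> struct_arrs C"
| s_sym:  "A \<in> ob C \<Longrightarrow> B \<in> ob C \<Longrightarrow> sy C A B \<in> struct_arrs C"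
| s_asc:  "A \<in> ob C \<Longrightarrow> B \<in> ob C \<Longrightarrow> D \<in> ob C \<Longrightarrow> asc C A B D \<in> struct_arrs C"
| s_asci: "A \<in> ob C \<Longrightarrow> B \<in> ob C \<Longrightarrow> D \<in> ob C \<Longrightarrow> inv_arr C (asc C A B D) \<in> struct_arrs C"
| s_lu:   "A \<in> ob C \<Longrightarrow> lu C A \<in> struct_arrs C"
| s_lui:  "A \<in> ob C \<Longrightarrow> inv_arr C (lu C A) \<in> struct_arrs C"
| s_ru:   "A \<in> ob C \<Longrightarrow> ru C A \<in> struct_arrs C"
| s_rui:  "A \<in> ob C \<Longrightarrow> inv_arr C (ru C A) \<in> struct_arrs C"
| s_tens: "f \<in> struct_arrs C \<Longrightarrow> g \<in> struct_arrs C \<Longrightarrow> tar C f g \<in> struct_arrs C"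
| s_comp: "f \<in> struct_arrs C \<Longrightarrow> g \<in> struct_arrs C \<Longrightarrow> cd C f = dm C g \<Longrightarrow>
           cp C g f \<in> struct_arrs C"

end

theory Submission
  imports Defs
begin


locale smc =
  fixes C :: "('o,'m,'x) smcat_scheme"
  assumes smc: "sym_monoidal_cat C"
begin

lemma cat: "category C" using smc by (simp add: sym_monoidal_cat_def monoidal_cat_def)
lemma mon: "monoidal_cat C" using smc by (simp add: sym_monoidal_cat_def)

lemma hom_iff: "f \<in> hom C A B \<longleftrightarrow> f \<in> ar C \<and> dm C f = A \<and> cd C f = B"
  by (simp add: hom_def)

lemma hom_ar: "f \<in> hom C A B \<Longrightarrow> f \<in> ar C" by (simp add: hom_def)
lemma hom_dm: "f \<in> hom C A B \<Longrightarrow> dm C f = A" by (simp add: hom_def)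
lemma hom_cd: "f \<in> hom C A B \<Longrightarrow> cd C f = B" by (simp add: hom_def)
lemma ar_hom: "f \<in> ar C \<Longrightarrow> f \<in> hom C (dm C f) (cd C f)" by (simp add: hom_def)

lemma hom_obs: "f \<in> hom C A B \<Longrightarrow> A \<in> ob C \<and> B \<in> ob C"
  using cat unfolding category_def hom_def by auto

lemma id_hom: "A \<in> ob C \<Longrightarrow> idm C A \<in> hom C A A"
  using cat unfolding category_def by auto

lemma comp_hom: "f \<in> hom C A B \<Longrightarrow> g \<in> hom C B D \<Longrightarrow> cp C g f \<in> hom C A D"
  using cat unfolding category_def hom_def by auto

lemma id_l: "f \<in> hom C A B \<Longrightarrow> cp C (idm C B) f = f"
  using cat unfolding category_def hom_def by auto
lemma id_r: "f \<in> hom C A B \<Longrightarrow> cp C f (idm C A) = f"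
  using cat unfolding category_def hom_def by auto

lemma assoc: "f \<in> hom C A B \<Longrightarrow> g \<in> hom C B D \<Longrightarrow> h \<in> hom C D E \<Longrightarrow>
   cp C h (cp C g f) = cp C (cp C h g) f"
  using cat unfolding category_def hom_def by auto

lemma unt_ob: "unt C \<in> ob C" using mon unfolding monoidal_cat_def by auto
lemma tob_ob: "A \<in> ob C \<Longrightarrow> B \<in> ob C \<Longrightarrow> tob C A B \<in> ob C"
  using mon unfolding monoidal_cat_def by auto

lemma tar_hom: "f \<in> hom C A B \<Longrightarrow> g \<in> hom C A' B' \<Longrightarrow> tar C f g \<in> hom C (tob C A A') (tob C B B')"
  using mon unfolding monoidal_cat_def hom_def by auto

lemma tar_id: "A \<in> ob C \<Longrightarrow> B \<in> ob C \<Longrightarrow> tar C (idm C A) (idm C B) = idm C (tob C A B)"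
  using mon unfolding monoidal_cat_def by auto

lemma interchange: "f \<in> hom C A B \<Longrightarrow> g \<in> hom C B D \<Longrightarrow> f' \<in> hom C A' B' \<Longrightarrow> g' \<in> hom C B' D' \<Longrightarrow>
   tar C (cp C g f) (cp C g' f') = cp C (tar C g g') (tar C f f')"
  using mon unfolding monoidal_cat_def hom_def by auto

lemma asc_hom: "A \<in> ob C \<Longrightarrow> B \<in> ob C \<Longrightarrow> D \<in> ob C \<Longrightarrow>
   asc C A B D \<in> hom C (tob C (tob C A B) D) (tob C A (tob C B D))"
  using mon unfolding monoidal_cat_def by auto
lemma asc_iso: "A \<in> ob C \<Longrightarrow> B \<in> ob C \<Longrightarrow> D \<in> ob C \<Longrightarrow> iso_arr C (asc C A B D)"
  using mon unfolding monoidal_cat_def by auto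
lemma lu_hom: "A \<in> ob C \<Longrightarrow> lu C A \<in> hom C (tob C (unt C) A) A \<and> iso_arr C (lu C A)"
  using mon unfolding monoidal_cat_def by auto
lemma ru_hom: "A \<in> ob C \<Longrightarrow> ru C A \<in> hom C (tob C A (unt C)) A \<and> iso_arr C (ru C A)"
  using mon unfolding monoidal_cat_def by auto

lemma asc_nat: "f \<in> hom C A A' \<Longrightarrow> g \<in> hom C B B' \<Longrightarrow> h \<in> hom C D D' \<Longrightarrow>
   cp C (asc C A' B' D') (tar C (tar C f g) h) = cp C (tar C f (tar C g h)) (asc C A B D)"
  using mon unfolding monoidal_cat_def hom_def by auto

lemma sy_hom: "A \<in> ob C \<Longrightarrow> B \<in> ob C \<Longrightarrow> sy C A B \<in> hom C (tob C A B) (tob C B A)"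
  using smc unfolding sym_monoidal_cat_def by auto
lemma sy_nat: "f \<in> hom C A A' \<Longrightarrow> g \<in> hom C B B' \<Longrightarrow>
   cp C (sy C A' B') (tar C f g) = cp C (tar C g f) (sy C A B)"
  using smc unfolding sym_monoidal_cat_def hom_def by auto
lemma sy_sy: "A \<in> ob C \<Longrightarrow> B \<in> ob C \<Longrightarrow> cp C (sy C B A) (sy C A B) = idm C (tob C A B)"
  using smc unfolding sym_monoidal_cat_def by auto

lemma is_inv_hom: "f \<in> hom C A B \<Longrightarrow> is_inv C f g \<longleftrightarrow> g \<in> hom C B A \<and> cp C g f = idm C A \<and> cp C f g = idm C B"
  unfolding is_inv_def hom_def by auto

lemma is_inv_unique: assumes "is_inv C f g" "is_inv C f g'" shows "g = g'"
proof -
  have f: "f \<in> hom C (dm C f) (cd C f)" using assms unfolding is_inv_def hom_def by auto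
  have g: "g \<in> hom C (cd C f) (dm C f)" and g': "g' \<in> hom C (cd C f) (dm C f)"
    using assms unfolding is_inv_def hom_def by auto
  have "g = cp C g (idm C (cd C f))" using id_r[OF g] by simp
  also have "\<dots> = cp C g (cp C f g')" using assms(2) unfolding is_inv_def by simp
  also have "\<dots> = cp C (cp C g f) g'" using assoc[OF g' f g] .
  also have "\<dots> = cp C (idm C (dm C f)) g'" using assms(1) unfolding is_inv_def by simp
  also have "\<dots> = g'" using id_l[OF g'] .
  finally show ?thesis .
qed

lemma inv_arr_eq: assumes g: "is_inv C f g" shows "inv_arr C f = g"
  unfolding inv_arr_def by (rule the_equality[where P="is_inv C f", OF g]) (rule is_inv_unique[OF _ g])

lemma inv_arr_is_inv: assumes "iso_arr C f" shows "is_inv C f (inv_arr C f)"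
proof -
  obtain g where g: "is_inv C f g" using assms unfolding iso_arr_def by blast
  show ?thesis using inv_arr_eq[OF g] g by simp
qed

lemma inv_props: assumes "f \<in> hom C A B" "iso_arr C f"
  shows "inv_arr C f \<in> hom C B A" "cp C (inv_arr C f) f = idm C A" "cp C f (inv_arr C f) = idm C B"
  using inv_arr_is_inv[OF assms(2)] is_inv_hom[OF assms(1)] by auto

lemma inv_iso: assumes "f \<in> hom C A B" "iso_arr C f" shows "iso_arr C (inv_arr C f)"
proof -
  note i = inv_props[OF assms]
  have "is_inv C (inv_arr C f) f" using is_inv_hom[OF i(1)] i assms(1) by blast
  then show ?thesis unfolding iso_arr_def by blast
qed

lemma comp_iso: assumes f: "f \<in> hom C A B" "iso_arr C f" and g: "g \<in> hom C B D" "iso_arr C g"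
  shows "iso_arr C (cp C g f)"
proof -
  note fi = inv_props[OF f] and gi = inv_props[OF g]
  have gf: "cp C g f \<in> hom C A D" using comp_hom f g by blast
  have inv: "cp C (inv_arr C f) (inv_arr C g) \<in> hom C D A" using comp_hom fi gi by blast
  have 1: "cp C (cp C (inv_arr C f) (inv_arr C g)) (cp C g f) = idm C A"
  proof -
    have "cp C (cp C (inv_arr C f) (inv_arr C g)) (cp C g f)
       = cp C (inv_arr C f) (cp C (inv_arr C g) (cp C g f))"
      using assoc[OF gf gi(1) fi(1)] by simp
    also have "cp C (inv_arr C g) (cp C g f) = cp C (cp C (inv_arr C g) g) f"
      using assoc[OF f(1) g(1) gi(1)] .
    also have "\<dots> = f" using gi(2) id_l[OF f(1)] by simp
    finally show ?thesis using fi(2) by simp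
  qed
  have 2: "cp C (cp C g f) (cp C (inv_arr C f) (inv_arr C g)) = idm C D"
  proof -
    have "cp C (cp C g f) (cp C (inv_arr C f) (inv_arr C g))
       = cp C g (cp C f (cp C (inv_arr C f) (inv_arr C g)))"
      using assoc[OF inv f(1) g(1)] by simp
    also have "cp C f (cp C (inv_arr C f) (inv_arr C g)) = cp C (cp C f (inv_arr C f)) (inv_arr C g)"
      using assoc[OF gi(1) fi(1) f(1)] .
    also have "\<dots> = inv_arr C g" using fi(3) id_l[OF gi(1)] by simp
    finally show ?thesis using gi(3) by simp
  qed
  show ?thesis unfolding iso_arr_def using is_inv_hom[OF gf] inv 1 2 by blast
qed

lemma tar_iso: assumes f: "f \<in> hom C A B" "iso_arr C f" and g: "g \<in> hom C A' B'" "iso_arr C g"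
  shows "iso_arr C (tar C f g)"
proof -
  note fi = inv_props[OF f] and gi = inv_props[OF g]
  have t: "tar C f g \<in> hom C (tob C A A') (tob C B B')" using tar_hom f g by blast
  have ti: "tar C (inv_arr C f) (inv_arr C g) \<in> hom C (tob C B B') (tob C A A')" using tar_hom fi gi by blast
  have obs: "A \<in> ob C" "B \<in> ob C" "A' \<in> ob C" "B' \<in> ob C" using hom_obs f g by auto
  have 1: "cp C (tar C (inv_arr C f) (inv_arr C g)) (tar C f g) = idm C (tob C A A')"
    using interchange[OF f(1) fi(1) g(1) gi(1)] fi gi tar_id obs by simp
  have 2: "cp C (tar C f g) (tar C (inv_arr C f) (inv_arr C g)) = idm C (tob C B B')"
    using interchange[OF fi(1) f(1) gi(1) g(1)] fi gi tar_id obs by simp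
  show ?thesis unfolding iso_arr_def using is_inv_hom[OF t] ti 1 2 by blast
qed

lemma conj_nat:
  assumes a: "a \<in> hom C P Q" "iso_arr C a" and b: "b \<in> hom C P' Q'" "iso_arr C b"
    and u: "u \<in> hom C P P'" and v: "v \<in> hom C Q Q'" and eq: "cp C b u = cp C v a"
  shows "cp C (inv_arr C b) v = cp C u (inv_arr C a)"
proof -
  note ai = inv_props[OF a] and bi = inv_props[OF b]
  have "cp C (inv_arr C b) v = cp C (inv_arr C b) (cp C v (idm C Q))" using id_r[OF v] by simp
  also have "\<dots> = cp C (inv_arr C b) (cp C v (cp C a (inv_arr C a)))" using ai by simp
  also have "cp C v (cp C a (inv_arr C a)) = cp C (cp C v a) (inv_arr C a)" using assoc[OF ai(1) a(1) v] .
  also have "\<dots> = cp C (cp C b u) (inv_arr C a)" using eq by simp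
  also have "\<dots> = cp C b (cp C u (inv_arr C a))" using assoc[OF ai(1) u b(1)] by simp
  also have "cp C (inv_arr C b) (cp C b (cp C u (inv_arr C a))) = cp C (cp C (inv_arr C b) b) (cp C u (inv_arr C a))"
    using assoc[OF comp_hom[OF ai(1) u] b(1) bi(1)] .
  also have "\<dots> = cp C u (inv_arr C a)" using bi(2) id_l[OF comp_hom[OF ai(1) u]] by simp
  finally show ?thesis .
qed

lemma struct_iso: "f \<in> struct_arrs C \<Longrightarrow> f \<in> ar C \<and> iso_arr C f"
proof (induction rule: struct_arrs.induct)
  case (s_id A)
  have h: "idm C A \<in> hom C A A" using id_hom[OF s_id] .
  have "is_inv C (idm C A) (idm C A)" using is_inv_hom[OF h] h id_l[OF h] by blast
  then show ?case using hom_ar[OF h] unfolding iso_arr_def by blast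
next
  case (s_sym A B)
  have h: "sy C A B \<in> hom C (tob C A B) (tob C B A)" using sy_hom s_sym by blast
  have h': "sy C B A \<in> hom C (tob C B A) (tob C A B)" using sy_hom s_sym by blast
  have "is_inv C (sy C A B) (sy C B A)" using is_inv_hom[OF h] h' sy_sy s_sym by blast
  then show ?case using hom_ar[OF h] unfolding iso_arr_def by blast
next
  case (s_asc A B D) then show ?case using asc_hom asc_iso hom_ar by blast
next
  case (s_asci A B D)
  have h: "asc C A B D \<in> hom C (tob C (tob C A B) D) (tob C A (tob C B D))" using asc_hom s_asci by blast
  have i: "iso_arr C (asc C A B D)" using asc_iso s_asci by blast
  show ?case using inv_props(1)[OF h i] inv_iso[OF h i] hom_ar by blast
next
  case (s_lu A) then show ?case using lu_hom hom_ar by blast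
next
  case (s_lui A)
  have h: "lu C A \<in> hom C (tob C (unt C) A) A" "iso_arr C (lu C A)" using lu_hom s_lui by auto
  show ?case using inv_props(1)[OF h] inv_iso[OF h] hom_ar by blast
next
  case (s_ru A) then show ?case using ru_hom hom_ar by blast
next
  case (s_rui A)
  have h: "ru C A \<in> hom C (tob C A (unt C)) A" "iso_arr C (ru C A)" using ru_hom s_rui by auto
  show ?case using inv_props(1)[OF h] inv_iso[OF h] hom_ar by blast
next
  case (s_tens f g)
  have "tar C f g \<in> hom C (tob C (dm C f) (dm C g)) (tob C (cd C f) (cd C g))"
    using tar_hom ar_hom s_tens by blast
  then show ?case using tar_iso[OF ar_hom _ ar_hom] s_tens hom_ar by blast
next
  case (s_comp f g)
  have f: "f \<in> hom C (dm C f) (dm C g)" using ar_hom s_comp by metis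
  have g: "g \<in> hom C (dm C g) (cd C g)" using ar_hom s_comp by metis
  show ?case using comp_iso[OF f _ g] comp_hom[OF f g] s_comp hom_ar by blast
qed

end



context smc begin

lemma id_iso: "A \<in> ob C \<Longrightarrow> iso_arr C (idm C A)"
  by (rule conjunct2[OF struct_iso[OF s_id]])

lemma tens_obs_cons: "xs \<noteq> [] \<Longrightarrow> tens_obs C (x # xs) = tob C x (tens_obs C xs)"
  by (cases xs) auto
lemma tens_ars_cons: "xs \<noteq> [] \<Longrightarrow> tens_ars C (x # xs) = tar C x (tens_ars C xs)"
  by (cases xs) auto

lemma tens_obs_ob: "\<forall>x\<in>set xs. x \<in> ob C \<Longrightarrow> tens_obs C xs \<in> ob C"
  by (induction xs rule: induct_list012) (auto simp: unt_ob tob_ob)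

lemma tens_ars_ar: "\<forall>x\<in>set xs. x \<in> ar C \<Longrightarrow> tens_ars C xs \<in> ar C"
proof (induction xs rule: induct_list012)
  case 1 then show ?case using id_hom[OF unt_ob] hom_ar by simp
next
  case (2 x) then show ?case by simp
next
  case (3 x y zs) then show ?case using tar_hom[OF ar_hom ar_hom, of x "tens_ars C (y # zs)"] hom_ar by simp
qed

lemma tens_ars_hom: "(\<forall>k\<in>set ks. F k \<in> hom C (X k) (Y k)) \<Longrightarrow>
   tens_ars C (map F ks) \<in> hom C (tens_obs C (map X ks)) (tens_obs C (map Y ks))"
proof (induction ks rule: induct_list012)
  case 1 then show ?case using id_hom[OF unt_ob] by simp
next
  case (2 x) then show ?case by simp
next
  case (3 x y zs)
  then have "tens_ars C (map F (y # zs)) \<in> hom C (tens_obs C (map X (y # zs))) (tens_obs C (map Y (y # zs)))"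
    by simp
  then show ?case using tar_hom 3(3) by simp
qed

lemma tens_ars_comp: "(\<forall>k\<in>set ks. F k \<in> hom C (X k) (Y k) \<and> G k \<in> hom C (Y k) (Z k)) \<Longrightarrow>
   cp C (tens_ars C (map G ks)) (tens_ars C (map F ks)) = tens_ars C (map (\<lambda>k. cp C (G k) (F k)) ks)"
proof (induction ks rule: induct_list012)
  case 1 then show ?case using id_l[OF id_hom[OF unt_ob]] by simp
next
  case (2 x) then show ?case by simp
next
  case (3 x y zs)
  have IH: "cp C (tens_ars C (map G (y # zs))) (tens_ars C (map F (y # zs))) = tens_ars C (map (\<lambda>k. cp C (G k) (F k)) (y # zs))"
    using 3 by simp
  have hF: "tens_ars C (map F (y # zs)) \<in> hom C (tens_obs C (map X (y # zs))) (tens_obs C (map Y (y # zs)))"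
    using tens_ars_hom[of "y#zs" F X Y] 3(3) by auto
  have hG: "tens_ars C (map G (y # zs)) \<in> hom C (tens_obs C (map Y (y # zs))) (tens_obs C (map Z (y # zs)))"
    using tens_ars_hom[of "y#zs" G Y Z] 3(3) by auto
  have hx: "F x \<in> hom C (X x) (Y x)" "G x \<in> hom C (Y x) (Z x)" using 3(3) by auto
  show ?case using interchange[OF hx(1) hx(2) hF hG] IH by simp
qed

lemma tens_ars_iso: "(\<forall>k\<in>set ks. F k \<in> hom C (X k) (Y k) \<and> iso_arr C (F k)) \<Longrightarrow>
   iso_arr C (tens_ars C (map F ks))"
proof (induction ks rule: induct_list012)
  case 1 then show ?case using id_iso[OF unt_ob] by simp
next
  case (2 x) then show ?case by simp
next
  case (3 x y zs)
  have hF: "tens_ars C (map F (y # zs)) \<in> hom C (tens_obs C (map X (y # zs))) (tens_obs C (map Y (y # zs)))"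
    using tens_ars_hom[of "y#zs" F X Y] 3(3) by auto
  have i: "iso_arr C (tens_ars C (map F (y # zs)))" using 3 by simp
  have hx: "F x \<in> hom C (X x) (Y x)" "iso_arr C (F x)" using 3(3) by auto
  show ?case using tar_iso[OF hx hF i] by simp
qed

lemma fun_hom: "strict_monoidal_autofunctor C FO FM \<Longrightarrow> f \<in> hom C A B \<Longrightarrow> FM f \<in> hom C (FO A) (FO B)"
  unfolding strict_monoidal_autofunctor_def functor_on_def hom_def by auto
lemma fun_ob: "strict_monoidal_autofunctor C FO FM \<Longrightarrow> A \<in> ob C \<Longrightarrow> FO A \<in> ob C"
  unfolding strict_monoidal_autofunctor_def functor_on_def by auto
lemma fun_comp: "strict_monoidal_autofunctor C FO FM \<Longrightarrow> f \<in> hom C A B \<Longrightarrow> g \<in> hom C B D \<Longrightarrow>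
   FM (cp C g f) = cp C (FM g) (FM f)"
  unfolding strict_monoidal_autofunctor_def functor_on_def hom_def by auto
lemma fun_id: "strict_monoidal_autofunctor C FO FM \<Longrightarrow> A \<in> ob C \<Longrightarrow> FM (idm C A) = idm C (FO A)"
  unfolding strict_monoidal_autofunctor_def functor_on_def by auto

lemma fun_unt: "strict_monoidal_autofunctor C FO FM \<Longrightarrow> FO (unt C) = unt C"
  unfolding strict_monoidal_autofunctor_def by blast
lemma fun_tob: "strict_monoidal_autofunctor C FO FM \<Longrightarrow> A \<in> ob C \<Longrightarrow> B \<in> ob C \<Longrightarrow> FO (tob C A B) = tob C (FO A) (FO B)"
  unfolding strict_monoidal_autofunctor_def by blast
lemma fun_tar: "strict_monoidal_autofunctor C FO FM \<Longrightarrow> f \<in> ar C \<Longrightarrow> g \<in> ar C \<Longrightarrow> FM (tar C f g) = tar C (FM f) (FM g)"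
  unfolding strict_monoidal_autofunctor_def by blast

lemma fun_iso: assumes F: "strict_monoidal_autofunctor C FO FM" and f: "f \<in> hom C A B" "iso_arr C f"
  shows "iso_arr C (FM f)"
proof -
  note fi = inv_props[OF f]
  have obs: "A \<in> ob C" "B \<in> ob C" using hom_obs f by auto
  have 1: "cp C (FM (inv_arr C f)) (FM f) = idm C (FO A)"
    using fun_comp[OF F f(1) fi(1)] fi(2) fun_id[OF F obs(1)] by simp
  have 2: "cp C (FM f) (FM (inv_arr C f)) = idm C (FO B)"
    using fun_comp[OF F fi(1) f(1)] fi(3) fun_id[OF F obs(2)] by simp
  have "is_inv C (FM f) (FM (inv_arr C f))"
    using is_inv_hom[OF fun_hom[OF F f(1)]] fun_hom[OF F fi(1)] 1 2 by blast
  then show ?thesis unfolding iso_arr_def by blast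
qed

lemma fun_tens_obs: assumes F: "strict_monoidal_autofunctor C FO FM"
  shows "\<forall>x\<in>set xs. x \<in> ob C \<Longrightarrow> FO (tens_obs C xs) = tens_obs C (map FO xs)"
proof (induction xs rule: induct_list012)
  case 1 then show ?case using fun_unt[OF F] by simp
next
  case (2 x) then show ?case by simp
next
  case (3 x y zs)
  have "tens_obs C (y # zs) \<in> ob C" using tens_obs_ob 3(3) by simp
  then show ?case using 3 fun_tob[OF F] by simp
qed

lemma fun_tens_ars: assumes F: "strict_monoidal_autofunctor C FO FM"
  shows "\<forall>x\<in>set xs. x \<in> ar C \<Longrightarrow> FM (tens_ars C xs) = tens_ars C (map FM xs)"
proof (induction xs rule: induct_list012)
  case 1 then show ?case using fun_unt[OF F] fun_id[OF F unt_ob] by simp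
next
  case (2 x) then show ?case by simp
next
  case (3 x y zs)
  have "tens_ars C (y # zs) \<in> ar C" using tens_ars_ar 3(3) by simp
  then show ?case using 3 fun_tar[OF F] by simp
qed

end



context smc begin

definition nat_fam :: "'k list \<Rightarrow> 'k list \<Rightarrow> (('k \<Rightarrow> 'o) \<Rightarrow> 'm) \<Rightarrow> bool" where
  "nat_fam ks ls S \<longleftrightarrow>
    (\<forall>X. (\<forall>k\<in>set ks. X k \<in> ob C) \<longrightarrow> S X \<in> struct_arrs C \<and>
         S X \<in> hom C (tens_obs C (map X ks)) (tens_obs C (map X ls)))
  \<and> (\<forall>X Y F. (\<forall>k\<in>set ks. F k \<in> hom C (X k) (Y k)) \<longrightarrow>
         cp C (S Y) (tens_ars C (map F ks)) = cp C (tens_ars C (map F ls)) (S X))"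

lemma nat_famI:
  assumes "\<And>X. (\<forall>k\<in>set ks. X k \<in> ob C) \<Longrightarrow> S X \<in> struct_arrs C"
    and "\<And>X. (\<forall>k\<in>set ks. X k \<in> ob C) \<Longrightarrow> S X \<in> hom C (tens_obs C (map X ks)) (tens_obs C (map X ls))"
    and "\<And>X Y F. (\<forall>k\<in>set ks. F k \<in> hom C (X k) (Y k)) \<Longrightarrow>
         cp C (S Y) (tens_ars C (map F ks)) = cp C (tens_ars C (map F ls)) (S X)"
  shows "nat_fam ks ls S"
  using assms unfolding nat_fam_def by blast

lemma nat_famD:
  assumes "nat_fam ks ls S"
  shows "(\<forall>k\<in>set ks. X k \<in> ob C) \<Longrightarrow> S X \<in> struct_arrs C"
    and "(\<forall>k\<in>set ks. X k \<in> ob C) \<Longrightarrow> S X \<in> hom C (tens_obs C (map X ks)) (tens_obs C (map X ls))"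
    and "(\<forall>k\<in>set ks. F k \<in> hom C (X k) (Y k)) \<Longrightarrow>
         cp C (S Y) (tens_ars C (map F ks)) = cp C (tens_ars C (map F ls)) (S X)"
  using assms unfolding nat_fam_def by blast+

lemma obs_of_homs: "\<forall>k\<in>set ks. F k \<in> hom C (X k) (Y k) \<Longrightarrow> (\<forall>k\<in>set ks. X k \<in> ob C) \<and> (\<forall>k\<in>set ks. Y k \<in> ob C)"
  using hom_obs by blast

lemma N_id: "nat_fam ks ks (\<lambda>X. idm C (tens_obs C (map X ks)))"
proof (rule nat_famI)
  fix X assume "\<forall>k\<in>set ks. X k \<in> ob C"
  then have o: "tens_obs C (map X ks) \<in> ob C" using tens_obs_ob by auto
  show "idm C (tens_obs C (map X ks)) \<in> struct_arrs C" using s_id[OF o] .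
  show "idm C (tens_obs C (map X ks)) \<in> hom C (tens_obs C (map X ks)) (tens_obs C (map X ks))" using id_hom[OF o] .
next
  fix X Y F assume a: "\<forall>k\<in>set ks. F k \<in> hom C (X k) (Y k)"
  have h: "tens_ars C (map F ks) \<in> hom C (tens_obs C (map X ks)) (tens_obs C (map Y ks))"
    using tens_ars_hom[OF a] .
  show "cp C (idm C (tens_obs C (map Y ks))) (tens_ars C (map F ks)) =
        cp C (tens_ars C (map F ks)) (idm C (tens_obs C (map X ks)))"
    using id_l[OF h] id_r[OF h] by simp
qed

lemma N_comp:
  assumes 1: "nat_fam ks ms S1" and 2: "nat_fam ms ls S2" and e: "set ks = set ms" and e2: "set ms = set ls"
  shows "nat_fam ks ls (\<lambda>X. cp C (S2 X) (S1 X))"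
proof (rule nat_famI)
  fix X assume a: "\<forall>k\<in>set ks. X k \<in> ob C"
  then have a': "\<forall>k\<in>set ms. X k \<in> ob C" using e by simp
  note h1 = nat_famD(2)[OF 1 a] and h2 = nat_famD(2)[OF 2 a']
  show "cp C (S2 X) (S1 X) \<in> struct_arrs C"
    using s_comp[OF nat_famD(1)[OF 1 a] nat_famD(1)[OF 2 a']] hom_cd[OF h1] hom_dm[OF h2] by simp
  show "cp C (S2 X) (S1 X) \<in> hom C (tens_obs C (map X ks)) (tens_obs C (map X ls))"
    using comp_hom[OF h1 h2] .
next
  fix X Y F assume a: "\<forall>k\<in>set ks. F k \<in> hom C (X k) (Y k)"
  then have a': "\<forall>k\<in>set ms. F k \<in> hom C (X k) (Y k)" using e by simp
  have oX: "\<forall>k\<in>set ks. X k \<in> ob C" and oY: "\<forall>k\<in>set ks. Y k \<in> ob C" using obs_of_homs[OF a] by auto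
  then have oX': "\<forall>k\<in>set ms. X k \<in> ob C" and oY': "\<forall>k\<in>set ms. Y k \<in> ob C" using e by auto
  note h1X = nat_famD(2)[OF 1 oX] and h1Y = nat_famD(2)[OF 1 oY]
  note h2X = nat_famD(2)[OF 2 oX'] and h2Y = nat_famD(2)[OF 2 oY']
  note Tk = tens_ars_hom[OF a] and Tm = tens_ars_hom[OF a']
  have Tl: "tens_ars C (map F ls) \<in> hom C (tens_obs C (map X ls)) (tens_obs C (map Y ls))"
    using tens_ars_hom a' e2 by simp
  have "cp C (cp C (S2 Y) (S1 Y)) (tens_ars C (map F ks)) = cp C (S2 Y) (cp C (S1 Y) (tens_ars C (map F ks)))"
    using assoc[OF Tk h1Y h2Y] by simp
  also have "\<dots> = cp C (S2 Y) (cp C (tens_ars C (map F ms)) (S1 X))" using nat_famD(3)[OF 1 a] by simp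
  also have "\<dots> = cp C (cp C (S2 Y) (tens_ars C (map F ms))) (S1 X)" using assoc[OF h1X Tm h2Y] .
  also have "\<dots> = cp C (cp C (tens_ars C (map F ls)) (S2 X)) (S1 X)" using nat_famD(3)[OF 2 a'] by simp
  also have "\<dots> = cp C (tens_ars C (map F ls)) (cp C (S2 X) (S1 X))" using assoc[OF h1X h2X Tl] by simp
  finally show "cp C (cp C (S2 Y) (S1 Y)) (tens_ars C (map F ks)) = cp C (tens_ars C (map F ls)) (cp C (S2 X) (S1 X))" .
qed

lemma N_cons:
  assumes 1: "nat_fam ks ls S" and ne: "ks \<noteq> []" "ls \<noteq> []" and e: "set ks = set ls"
  shows "nat_fam (y # ks) (y # ls) (\<lambda>X. tar C (idm C (X y)) (S X))"
proof (rule nat_famI)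
  fix X assume a: "\<forall>k\<in>set (y # ks). X k \<in> ob C"
  then have a': "\<forall>k\<in>set ks. X k \<in> ob C" and y: "X y \<in> ob C" by auto
  note h = nat_famD(2)[OF 1 a']
  show "tar C (idm C (X y)) (S X) \<in> struct_arrs C" using s_tens[OF s_id[OF y] nat_famD(1)[OF 1 a']] .
  show "tar C (idm C (X y)) (S X) \<in> hom C (tens_obs C (map X (y # ks))) (tens_obs C (map X (y # ls)))"
    using tar_hom[OF id_hom[OF y] h] ne tens_obs_cons by simp
next
  fix X Y F assume a: "\<forall>k\<in>set (y # ks). F k \<in> hom C (X k) (Y k)"
  then have a': "\<forall>k\<in>set ks. F k \<in> hom C (X k) (Y k)" and fy: "F y \<in> hom C (X y) (Y y)" by auto
  have a'': "\<forall>k\<in>set ls. F k \<in> hom C (X k) (Y k)" using a' e by simp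
  have oX: "\<forall>k\<in>set ks. X k \<in> ob C" and oY: "\<forall>k\<in>set ks. Y k \<in> ob C" using obs_of_homs[OF a'] by auto
  have yo: "X y \<in> ob C" "Y y \<in> ob C" using hom_obs[OF fy] by auto
  note hX = nat_famD(2)[OF 1 oX] and hY = nat_famD(2)[OF 1 oY]
  note Tk = tens_ars_hom[OF a'] and Tl = tens_ars_hom[OF a'']
  have "cp C (tar C (idm C (Y y)) (S Y)) (tens_ars C (map F (y # ks)))
      = cp C (tar C (idm C (Y y)) (S Y)) (tar C (F y) (tens_ars C (map F ks)))" using ne tens_ars_cons by simp
  also have "\<dots> = tar C (cp C (idm C (Y y)) (F y)) (cp C (S Y) (tens_ars C (map F ks)))"
    using interchange[OF fy id_hom[OF yo(2)] Tk hY] by simp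
  also have "\<dots> = tar C (cp C (F y) (idm C (X y))) (cp C (tens_ars C (map F ls)) (S X))"
    using id_l[OF fy] id_r[OF fy] nat_famD(3)[OF 1 a'] by simp
  also have "\<dots> = cp C (tar C (F y) (tens_ars C (map F ls))) (tar C (idm C (X y)) (S X))"
    using interchange[OF id_hom[OF yo(1)] fy hX Tl] .
  also have "\<dots> = cp C (tens_ars C (map F (y # ls))) (tar C (idm C (X y)) (S X))" using ne tens_ars_cons by simp
  finally show "cp C (tar C (idm C (Y y)) (S Y)) (tens_ars C (map F (y # ks))) =
        cp C (tens_ars C (map F (y # ls))) (tar C (idm C (X y)) (S X))" .
qed

lemma N_swap2: "nat_fam [x, y] [y, x] (\<lambda>X. sy C (X x) (X y))"
proof (rule nat_famI)
  fix X assume a: "\<forall>k\<in>set [x, y]. X k \<in> ob C"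
  then show "sy C (X x) (X y) \<in> struct_arrs C" by (auto intro: s_sym)
  show "sy C (X x) (X y) \<in> hom C (tens_obs C (map X [x, y])) (tens_obs C (map X [y, x]))"
    using sy_hom a by simp
next
  fix X Y F assume a: "\<forall>k\<in>set [x, y]. F k \<in> hom C (X k) (Y k)"
  then show "cp C (sy C (Y x) (Y y)) (tens_ars C (map F [x, y])) = cp C (tens_ars C (map F [y, x])) (sy C (X x) (X y))"
    using sy_nat by simp
qed

definition sw3 :: "'k \<Rightarrow> 'k \<Rightarrow> 'k list \<Rightarrow> ('k \<Rightarrow> 'o) \<Rightarrow> 'm" where
  "sw3 x y R X = cp C (asc C (X y) (X x) (tens_obs C (map X R)))
      (cp C (tar C (sy C (X x) (X y)) (idm C (tens_obs C (map X R))))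
        (inv_arr C (asc C (X x) (X y) (tens_obs C (map X R)))))"

lemma sw3_hom:
  assumes a: "X x \<in> ob C" "X y \<in> ob C" "\<forall>k\<in>set R. X k \<in> ob C"
  shows "sw3 x y R X \<in> struct_arrs C \<and> sw3 x y R X \<in> hom C (tob C (X x) (tob C (X y) (tens_obs C (map X R))))
     (tob C (X y) (tob C (X x) (tens_obs C (map X R))))"
proof -
  define T where "T = tens_obs C (map X R)"
  have t: "T \<in> ob C" unfolding T_def using tens_obs_ob a(3) by simp
  have h1: "asc C (X x) (X y) T \<in> hom C (tob C (tob C (X x) (X y)) T) (tob C (X x) (tob C (X y) T))"
    using asc_hom a t by blast
  have i1: "iso_arr C (asc C (X x) (X y) T)" using asc_iso a t by blast
  note hi = inv_props(1)[OF h1 i1]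
  have h2: "tar C (sy C (X x) (X y)) (idm C T) \<in> hom C (tob C (tob C (X x) (X y)) T) (tob C (tob C (X y) (X x)) T)"
    using tar_hom[OF sy_hom[OF a(1,2)] id_hom[OF t]] .
  have h3: "asc C (X y) (X x) T \<in> hom C (tob C (tob C (X y) (X x)) T) (tob C (X y) (tob C (X x) T))"
    using asc_hom a t by blast
  have s1: "inv_arr C (asc C (X x) (X y) T) \<in> struct_arrs C" using s_asci[of "X x" C "X y" T] a t by blast
  have s2: "tar C (sy C (X x) (X y)) (idm C T) \<in> struct_arrs C"
    using s_tens[OF s_sym[OF a(1,2)] s_id[OF t]] .
  have s3: "asc C (X y) (X x) T \<in> struct_arrs C" using s_asc[of "X y" C "X x" T] a t by blast
  have s21: "cp C (tar C (sy C (X x) (X y)) (idm C T)) (inv_arr C (asc C (X x) (X y) T)) \<in> struct_arrs C"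
    using s_comp[OF s1 s2] hom_cd[OF hi] hom_dm[OF h2] by simp
  have h21: "cp C (tar C (sy C (X x) (X y)) (idm C T)) (inv_arr C (asc C (X x) (X y) T)) \<in> hom C (tob C (X x) (tob C (X y) T)) (tob C (tob C (X y) (X x)) T)"
    using comp_hom[OF hi h2] .
  show ?thesis unfolding sw3_def T_def[symmetric]
    using s_comp[OF s21 s3] hom_cd[OF h21] hom_dm[OF h3] comp_hom[OF h21 h3] by simp
qed

lemma N_swap3:
  assumes ne: "R \<noteq> []"
  shows "nat_fam (x # y # R) (y # x # R) (sw3 x y R)"
proof (rule nat_famI)
  fix X assume a: "\<forall>k\<in>set (x # y # R). X k \<in> ob C"
  then have a': "X x \<in> ob C" "X y \<in> ob C" "\<forall>k\<in>set R. X k \<in> ob C" by auto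
  note sh = sw3_hom[OF a']
  show "sw3 x y R X \<in> struct_arrs C" using sh by blast
  show "sw3 x y R X \<in> hom C (tens_obs C (map X (x # y # R))) (tens_obs C (map X (y # x # R)))"
    using sh ne tens_obs_cons by simp
next
  fix X Y F assume a: "\<forall>k\<in>set (x # y # R). F k \<in> hom C (X k) (Y k)"
  have fa: "F x \<in> hom C (X x) (Y x)" and fb: "F y \<in> hom C (X y) (Y y)" and aR: "\<forall>k\<in>set R. F k \<in> hom C (X k) (Y k)"
    using a by auto
  have ox: "X x \<in> ob C" "X y \<in> ob C" "Y x \<in> ob C" "Y y \<in> ob C" using hom_obs fa fb by auto
  define TX where "TX = tens_obs C (map X R)"
  define TY where "TY = tens_obs C (map Y R)"
  define r where "r = tens_ars C (map F R)"
  have hr: "r \<in> hom C TX TY" unfolding r_def TX_def TY_def using tens_ars_hom[OF aR] .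
  have tX: "TX \<in> ob C" and tY: "TY \<in> ob C" using hom_obs[OF hr] by auto
  define aX where "aX = asc C (X x) (X y) TX"
  define aY where "aY = asc C (Y x) (Y y) TY"
  define bX where "bX = asc C (X y) (X x) TX"
  define bY where "bY = asc C (Y y) (Y x) TY"
  define sX where "sX = tar C (sy C (X x) (X y)) (idm C TX)"
  define sY where "sY = tar C (sy C (Y x) (Y y)) (idm C TY)"
  have haX: "aX \<in> hom C (tob C (tob C (X x) (X y)) TX) (tob C (X x) (tob C (X y) TX))" "iso_arr C aX"
    unfolding aX_def using asc_hom asc_iso ox tX by auto
  have haY: "aY \<in> hom C (tob C (tob C (Y x) (Y y)) TY) (tob C (Y x) (tob C (Y y) TY))" "iso_arr C aY"
    unfolding aY_def using asc_hom asc_iso ox tY by auto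
  have hbX: "bX \<in> hom C (tob C (tob C (X y) (X x)) TX) (tob C (X y) (tob C (X x) TX))"
    unfolding bX_def using asc_hom ox tX by auto
  have hbY: "bY \<in> hom C (tob C (tob C (Y y) (Y x)) TY) (tob C (Y y) (tob C (Y x) TY))"
    unfolding bY_def using asc_hom ox tY by auto
  have hsX: "sX \<in> hom C (tob C (tob C (X x) (X y)) TX) (tob C (tob C (X y) (X x)) TX)"
    unfolding sX_def using tar_hom[OF sy_hom id_hom] ox tX by auto
  have hsY: "sY \<in> hom C (tob C (tob C (Y x) (Y y)) TY) (tob C (tob C (Y y) (Y x)) TY)"
    unfolding sY_def using tar_hom[OF sy_hom id_hom] ox tY by auto
  note iaX = inv_props(1)[OF haX] and iaY = inv_props(1)[OF haY]
  define T where "T = tar C (F x) (tar C (F y) r)"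
  define U where "U = tar C (tar C (F x) (F y)) r"
  define V where "V = tar C (tar C (F y) (F x)) r"
  define W where "W = tar C (F y) (tar C (F x) r)"
  have hT: "T \<in> hom C (tob C (X x) (tob C (X y) TX)) (tob C (Y x) (tob C (Y y) TY))"
    unfolding T_def using tar_hom[OF fa tar_hom[OF fb hr]] .
  have hU: "U \<in> hom C (tob C (tob C (X x) (X y)) TX) (tob C (tob C (Y x) (Y y)) TY)"
    unfolding U_def using tar_hom[OF tar_hom[OF fa fb] hr] .
  have hV: "V \<in> hom C (tob C (tob C (X y) (X x)) TX) (tob C (tob C (Y y) (Y x)) TY)"
    unfolding V_def using tar_hom[OF tar_hom[OF fb fa] hr] .
  have hW: "W \<in> hom C (tob C (X y) (tob C (X x) TX)) (tob C (Y y) (tob C (Y x) TY))"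
    unfolding W_def using tar_hom[OF fb tar_hom[OF fa hr]] .
  have st1: "cp C (inv_arr C aY) T = cp C U (inv_arr C aX)"
    apply (rule conj_nat[OF haX haY hU hT])
    unfolding aY_def aX_def U_def T_def using asc_nat[OF fa fb hr] .
  have st2: "cp C sY U = cp C V sX"
  proof -
    have "cp C sY U = tar C (cp C (sy C (Y x) (Y y)) (tar C (F x) (F y))) (cp C (idm C TY) r)"
      unfolding sY_def U_def using interchange[OF tar_hom[OF fa fb] sy_hom[OF ox(3,4)] hr id_hom[OF tY]] by simp
    also have "\<dots> = tar C (cp C (tar C (F y) (F x)) (sy C (X x) (X y))) (cp C r (idm C TX))"
      using sy_nat[OF fa fb] id_l[OF hr] id_r[OF hr] by simp
    also have "\<dots> = cp C V sX"
      unfolding V_def sX_def using interchange[OF sy_hom[OF ox(1,2)] tar_hom[OF fb fa] id_hom[OF tX] hr] .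
    finally show ?thesis .
  qed
  have st3: "cp C bY V = cp C W bX"
    unfolding bY_def V_def W_def bX_def using asc_nat[OF fb fa hr] .
  have SX: "sw3 x y R X = cp C bX (cp C sX (inv_arr C aX))"
    unfolding sw3_def bX_def sX_def aX_def TX_def ..
  have SY: "sw3 x y R Y = cp C bY (cp C sY (inv_arr C aY))"
    unfolding sw3_def bY_def sY_def aY_def TY_def ..
  have LT: "tens_ars C (map F (x # y # R)) = T" unfolding T_def r_def using ne tens_ars_cons by simp
  have RW: "tens_ars C (map F (y # x # R)) = W" unfolding W_def r_def using ne tens_ars_cons by simp
  have "cp C (cp C bY (cp C sY (inv_arr C aY))) T = cp C bY (cp C (cp C sY (inv_arr C aY)) T)"
    using assoc[OF hT comp_hom[OF iaY hsY] hbY] by simp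
  also have "cp C (cp C sY (inv_arr C aY)) T = cp C sY (cp C (inv_arr C aY) T)"
    using assoc[OF hT iaY hsY] by simp
  also have "\<dots> = cp C sY (cp C U (inv_arr C aX))" using st1 by simp
  also have "\<dots> = cp C (cp C sY U) (inv_arr C aX)" using assoc[OF iaX hU hsY] .
  also have "\<dots> = cp C (cp C V sX) (inv_arr C aX)" using st2 by simp
  also have "\<dots> = cp C V (cp C sX (inv_arr C aX))" using assoc[OF iaX hsX hV] by simp
  also have "cp C bY (cp C V (cp C sX (inv_arr C aX))) = cp C (cp C bY V) (cp C sX (inv_arr C aX))"
    using assoc[OF comp_hom[OF iaX hsX] hV hbY] .
  also have "\<dots> = cp C (cp C W bX) (cp C sX (inv_arr C aX))" using st3 by simp
  also have "\<dots> = cp C W (cp C bX (cp C sX (inv_arr C aX)))" using assoc[OF comp_hom[OF iaX hsX] hbX hW] by simp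
  finally show "cp C (sw3 x y R Y) (tens_ars C (map F (x # y # R))) = cp C (tens_ars C (map F (y # x # R))) (sw3 x y R X)"
    using SX SY LT RW by simp
qed

lemma N_move: "distinct xs \<Longrightarrow> y \<in> set xs \<Longrightarrow> \<exists>S. nat_fam xs (y # remove1 y xs) S"
proof (induction xs)
  case Nil then show ?case by simp
next
  case (Cons x xs)
  show ?case
  proof (cases "y = x")
    case True then show ?thesis using N_id by auto
  next
    case False
    then have y: "y \<in> set xs" and d: "distinct xs" and xn: "x \<notin> set xs" using Cons.prems by auto
    obtain S' where S': "nat_fam xs (y # remove1 y xs) S'" using Cons.IH[OF d y] by blast
    define R where "R = remove1 y xs"
    have rm: "remove1 y (x # xs) = x # R" using False R_def by simp
    have setR: "set xs = set (y # R)" unfolding R_def using d y by (auto simp: set_remove1_eq)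
    show ?thesis
    proof (cases "R = []")
      case True
      then have "xs = [y]" using setR d by (cases xs) (auto simp: subset_singleton_iff)
      then show ?thesis using rm True N_swap2[of x y] by auto
    next
      case False
      have xsne: "xs \<noteq> []" using y by auto
      have 1: "nat_fam (x # xs) (x # y # R) (\<lambda>X. tar C (idm C (X x)) (S' X))"
        using N_cons[OF S'[folded R_def] xsne _ setR] by simp
      have 2: "nat_fam (x # y # R) (y # x # R) (sw3 x y R)" using N_swap3[OF False] .
      have "nat_fam (x # xs) (y # x # R) (\<lambda>X. cp C (sw3 x y R X) (tar C (idm C (X x)) (S' X)))"
        using N_comp[OF 1 2] setR by auto
      then show ?thesis using rm by auto
    qed
  qed
qed

lemma N_perm: "distinct ks \<Longrightarrow> distinct ls \<Longrightarrow> set ks = set ls \<Longrightarrow> \<exists>S. nat_fam ks ls S"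
proof (induction ls arbitrary: ks)
  case Nil then show ?case using N_id by auto
next
  case (Cons y ls)
  have y: "y \<in> set ks" using Cons.prems by auto
  obtain M where M: "nat_fam ks (y # remove1 y ks) M" using N_move[OF Cons.prems(1) y] by blast
  define R where "R = remove1 y ks"
  have dR: "distinct R" unfolding R_def using Cons.prems(1) by simp
  have setR: "set R = set ls" unfolding R_def using Cons.prems by (auto simp: set_remove1_eq)
  obtain P where P: "nat_fam R ls P" using Cons.IH[OF dR _ setR] Cons.prems(2) by auto
  show ?case
  proof (cases "ls = []")
    case True
    then have "R = []" using setR by simp
    then show ?thesis using M True R_def by auto
  next
    case False
    have Rne: "R \<noteq> []" using setR False by auto
    have 2: "nat_fam (y # R) (y # ls) (\<lambda>X. tar C (idm C (X y)) (P X))" using N_cons[OF P Rne False setR] .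
    have "nat_fam ks (y # ls) (\<lambda>X. cp C (tar C (idm C (X y)) (P X)) (M X))"
      using N_comp[OF M[folded R_def] 2] setR Cons.prems(3) by auto
    then show ?thesis by blast
  qed
qed

end



lemma (in group) transv:
  assumes sub: "subgroup H G" and T: "left_transversal G H ts" and g: "g \<in> carrier G"
  shows "\<exists>h \<psi>. (\<forall>t\<in>set ts. h t \<in> H \<and> t \<otimes> h t \<in> (\<lambda>s. g \<otimes> s) ` set ts)
     \<and> (\<forall>t\<in>set ts. \<psi> t \<in> set ts \<and> \<psi> t \<otimes> h (\<psi> t) = g \<otimes> t)
     \<and> distinct (map \<psi> ts) \<and> set (map \<psi> ts) = set ts"
proof -
  have tsc: "set ts \<subseteq> carrier G" using T unfolding left_transversal_def by blast
  have Hc: "H \<subseteq> carrier G" using subgroup.subset[OF sub] .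
  have uniq: "\<And>x. x \<in> carrier G \<Longrightarrow> \<exists>!t. t \<in> set ts \<and> x \<in> t <# H"
    using T unfolding left_transversal_def by blast
  have mem: "\<And>x t. x \<in> t <# H \<longleftrightarrow> (\<exists>k\<in>H. x = t \<otimes> k)" by (auto simp: l_coset_def)
  define p where "p s = (THE t. t \<in> set ts \<and> inv g \<otimes> s \<in> t <# H)" for s
  define \<psi> where "\<psi> t = (THE s. s \<in> set ts \<and> g \<otimes> t \<in> s <# H)" for t
  define h where "h s = inv s \<otimes> (g \<otimes> p s)" for s
  have p: "p s \<in> set ts \<and> inv g \<otimes> s \<in> p s <# H" if s: "s \<in> set ts" for s
  proof -
    have "inv g \<otimes> s \<in> carrier G" using s tsc g by auto
    from theI'[OF uniq[OF this]] show ?thesis unfolding p_def .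
  qed
  have ps: "\<psi> t \<in> set ts \<and> g \<otimes> t \<in> \<psi> t <# H" if t: "t \<in> set ts" for t
  proof -
    have "g \<otimes> t \<in> carrier G" using t tsc g by auto
    from theI'[OF uniq[OF this]] show ?thesis unfolding \<psi>_def .
  qed
  have hH: "h s \<in> H \<and> s \<otimes> h s = g \<otimes> p s" if s: "s \<in> set ts" for s
  proof -
    have sc: "s \<in> carrier G" using s tsc by auto
    have pc: "p s \<in> carrier G" using p[OF s] tsc by auto
    obtain k where k: "k \<in> H" "inv g \<otimes> s = p s \<otimes> k" using p[OF s] mem by blast
    have kc: "k \<in> carrier G" using k Hc by auto
    have s_eq: "s = g \<otimes> (p s \<otimes> k)" using inv_solve_left'[of "p s \<otimes> k" g s] k pc kc g sc by simp
    have "s \<otimes> inv k = g \<otimes> p s"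
    proof -
      define q where "q = p s"
      have qc: "q \<in> carrier G" using pc q_def by simp
      have "s \<otimes> inv k = g \<otimes> (q \<otimes> k) \<otimes> inv k" using s_eq q_def by simp
      also have "\<dots> = g \<otimes> q" using qc kc g by (simp add: m_assoc)
      finally show ?thesis using q_def by simp
    qed
    then have "h s = inv k" unfolding h_def using inv_solve_left'[of "inv k" s "g \<otimes> p s"] sc kc pc g by simp
    then have "h s \<in> H" using subgroup.m_inv_closed[OF sub k(1)] by simp
    moreover have "s \<otimes> h s = g \<otimes> p s" unfolding h_def using sc pc g by (simp add: m_assoc[symmetric])
    ultimately show ?thesis by blast
  qed
  have pps: "p (\<psi> t) = t" if t: "t \<in> set ts" for t
  proof -
    have tc: "t \<in> carrier G" using t tsc by auto
    have qc: "\<psi> t \<in> carrier G" using ps[OF t] tsc by auto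
    obtain k where k: "k \<in> H" "g \<otimes> t = \<psi> t \<otimes> k" using ps[OF t] mem by blast
    have kc: "k \<in> carrier G" using k Hc by auto
    have "\<psi> t = g \<otimes> t \<otimes> inv k" using inv_solve_right[of "\<psi> t" "g \<otimes> t" k] k(2) qc kc tc g by simp
    then have "inv g \<otimes> \<psi> t = t \<otimes> inv k" using tc kc g by (simp add: m_assoc[symmetric])
    then have "inv g \<otimes> \<psi> t \<in> t <# H" using mem subgroup.m_inv_closed[OF sub k(1)] by blast
    moreover have "inv g \<otimes> \<psi> t \<in> carrier G" using qc g by simp
    ultimately show ?thesis using p[OF ps[THEN conjunct1, OF t]] uniq t by blast
  qed
  have psp: "\<psi> (p s) = s" if s: "s \<in> set ts" for s
  proof -
    have pt: "p s \<in> set ts" using p[OF s] by blast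
    have "g \<otimes> p s \<in> s <# H" using hH[OF s] mem by metis
    moreover have "g \<otimes> p s \<in> carrier G" using pt tsc g by auto
    ultimately show ?thesis using ps[OF pt] uniq s by blast
  qed
  have inj: "inj_on \<psi> (set ts)" by (metis inj_on_inverseI pps)
  have d: "distinct ts" using T unfolding left_transversal_def by blast
  have st: "\<psi> ` set ts = set ts"
  proof
    show "\<psi> ` set ts \<subseteq> set ts" using ps by blast
    show "set ts \<subseteq> \<psi> ` set ts"
    proof
      fix s assume s: "s \<in> set ts"
      then show "s \<in> \<psi> ` set ts" using psp[OF s] p[OF s] by (metis image_eqI)
    qed
  qed
  have 1: "\<forall>t\<in>set ts. h t \<in> H \<and> t \<otimes> h t \<in> (\<lambda>s. g \<otimes> s) ` set ts"
    using hH p by blast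
  have 2: "\<forall>t\<in>set ts. \<psi> t \<in> set ts \<and> \<psi> t \<otimes> h (\<psi> t) = g \<otimes> t"
    using hH ps pps by metis
  have 3: "distinct (map \<psi> ts) \<and> set (map \<psi> ts) = set ts" using inj d st distinct_map by auto
  show ?thesis using 1 2 3 by blast
qed




theorem mainTheorem3:
  fixes C :: "('o, 'm) smcat" and G :: "('g, 'b) monoid_scheme" and H :: "'g set"
    and phiO :: "'g \<Rightarrow> 'o \<Rightarrow> 'o" and phiM :: "'g \<Rightarrow> 'm \<Rightarrow> 'm"
    and eta :: "'g \<Rightarrow> 'o \<Rightarrow> 'm" and ts :: "'g list"
  assumes "sym_monoidal_cat C"
    and "group G" and "finite (carrier G)"
    and "strict_action C G phiO phiM"
    and "subgroup H G"
    and "eta_data C G H phiO phiM eta"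
    and "left_transversal G H ts"
  shows "\<forall>g \<in> carrier G. \<exists>(h :: 'g \<Rightarrow> 'g) (\<alpha> :: 'o \<Rightarrow> 'm).
     (\<forall>t \<in> set ts. h t \<in> H \<and> t \<otimes>\<^bsub>G\<^esub> h t \<in> (\<lambda>s. g \<otimes>\<^bsub>G\<^esub> s) ` set ts)
   \<and> (\<forall>A \<in> ob C. \<exists>\<sigma>.
        \<sigma> \<in> struct_arrs C
      \<and> \<sigma> \<in> hom C (phiO g (fold_obj C phiO ts A))
                   (tens_obs C (map (\<lambda>t. phiO (t \<otimes>\<^bsub>G\<^esub> h t) A) ts))
      \<and> \<alpha> A = cp C (tens_ars C (map (\<lambda>t. phiM t (inv_arr C (eta (h t) A))) ts)) \<sigma>
      \<and> \<alpha> A \<in> hom C (phiO g (fold_obj C phiO ts A)) (fold_obj C phiO ts A)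
      \<and> iso_arr C (\<alpha> A))
   \<and> (\<forall>A \<in> ob C. \<forall>B \<in> ob C. \<forall>f \<in> hat_hom C H phiO phiM eta A B.
        cp C (\<alpha> B) (cp C (phiM g (fold_arr C phiM ts f)) (inv_arr C (\<alpha> A)))
        = fold_arr C phiM ts f)"
proof (intro ballI)
  fix g assume g: "g \<in> carrier G"
  interpret smc C using assms(1) by unfold_locales
  interpret grp: group G using assms(2) .
  obtain h \<psi> where H1: "\<forall>t\<in>set ts. h t \<in> H \<and> t \<otimes>\<^bsub>G\<^esub> h t \<in> (\<lambda>s. g \<otimes>\<^bsub>G\<^esub> s) ` set ts"
    and H2: "\<forall>t\<in>set ts. \<psi> t \<in> set ts \<and> \<psi> t \<otimes>\<^bsub>G\<^esub> h (\<psi> t) = g \<otimes>\<^bsub>G\<^esub> t"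
    and dk: "distinct (map \<psi> ts)" and sk: "set (map \<psi> ts) = set ts"
    using grp.transv[OF assms(5) assms(7) g] by blast
  have dts: "distinct ts" and tsc: "set ts \<subseteq> carrier G" using assms(7) unfolding left_transversal_def by auto
  have Hc: "H \<subseteq> carrier G" using subgroup.subset[OF assms(5)] .
  obtain S where S: "nat_fam (map \<psi> ts) ts S" using N_perm[OF dk dts sk] by blast
  have F: "\<And>a. a \<in> carrier G \<Longrightarrow> strict_monoidal_autofunctor C (phiO a) (phiM a)"
    using assms(4) unfolding strict_action_def by blast
  have Fhom: "\<And>a f A B. a \<in> carrier G \<Longrightarrow> f \<in> hom C A B \<Longrightarrow> phiM a f \<in> hom C (phiO a A) (phiO a B)"
    by (rule fun_hom[OF F])
  have actO: "\<And>a b A. a \<in> carrier G \<Longrightarrow> b \<in> carrier G \<Longrightarrow> A \<in> ob C \<Longrightarrow> phiO a (phiO b A) = phiO (a \<otimes>\<^bsub>G\<^esub> b) A"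
    using assms(4) unfolding strict_action_def by blast
  have actM: "\<And>a b f. a \<in> carrier G \<Longrightarrow> b \<in> carrier G \<Longrightarrow> f \<in> ar C \<Longrightarrow> phiM a (phiM b f) = phiM (a \<otimes>\<^bsub>G\<^esub> b) f"
    using assms(4) unfolding strict_action_def by blast
  have etaH: "\<And>k A. k \<in> H \<Longrightarrow> A \<in> ob C \<Longrightarrow> eta k A \<in> hom C A (phiO k A) \<and> iso_arr C (eta k A)"
    using assms(6) unfolding eta_data_def by blast
  have htH: "\<And>t. t \<in> set ts \<Longrightarrow> h t \<in> H" using H1 by blast
  have thc: "\<And>t. t \<in> set ts \<Longrightarrow> t \<otimes>\<^bsub>G\<^esub> h t \<in> carrier G" using htH Hc tsc by blast
  define X where "X A s = phiO (s \<otimes>\<^bsub>G\<^esub> h s) A" for A s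
  define Rf where "Rf A t = phiM t (inv_arr C (eta (h t) A))" for A t
  define \<alpha> where "\<alpha> A = cp C (tens_ars C (map (Rf A) ts)) (S (X A))" for A
  have Xob: "\<forall>k\<in>set (map \<psi> ts). X A k \<in> ob C" if A: "A \<in> ob C" for A
    using sk thc fun_ob[OF F] A unfolding X_def by auto
  have src: "phiO g (fold_obj C phiO ts A) = tens_obs C (map (X A) (map \<psi> ts))" if A: "A \<in> ob C" for A
  proof -
    have "\<forall>x\<in>set (map (\<lambda>t. phiO t A) ts). x \<in> ob C" using tsc fun_ob[OF F] A by auto
    then have "phiO g (fold_obj C phiO ts A) = tens_obs C (map (phiO g) (map (\<lambda>t. phiO t A) ts))"
      unfolding fold_obj_def using fun_tens_obs[OF F[OF g]] by blast
    also have "map (phiO g) (map (\<lambda>t. phiO t A) ts) = map (X A) (map \<psi> ts)"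
    proof -
      have "\<forall>t\<in>set ts. phiO g (phiO t A) = X A (\<psi> t)"
        unfolding X_def using H2 actO g tsc A by auto
      then show ?thesis by simp
    qed
    finally show ?thesis .
  qed
  have Rh: "Rf A t \<in> hom C (X A t) (phiO t A) \<and> iso_arr C (Rf A t)" if A: "A \<in> ob C" and t: "t \<in> set ts" for A t
  proof -
    have e: "eta (h t) A \<in> hom C A (phiO (h t) A)" "iso_arr C (eta (h t) A)" using etaH htH[OF t] A by auto
    have tc: "t \<in> carrier G" "h t \<in> carrier G" using t tsc htH Hc by auto
    have "Rf A t \<in> hom C (phiO t (phiO (h t) A)) (phiO t A)"
      unfolding Rf_def using fun_hom[OF F[OF tc(1)] inv_props(1)[OF e]] .
    moreover have "iso_arr C (Rf A t)" unfolding Rf_def using fun_iso[OF F[OF tc(1)] inv_props(1)[OF e] inv_iso[OF e]] .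
    ultimately show ?thesis unfolding X_def using actO tc A by simp
  qed
  have Rhom: "tens_ars C (map (Rf A) ts) \<in> hom C (tens_obs C (map (X A) ts)) (fold_obj C phiO ts A)"
    and Riso: "iso_arr C (tens_ars C (map (Rf A) ts))" if A: "A \<in> ob C" for A
  proof -
    have "\<forall>t\<in>set ts. Rf A t \<in> hom C (X A t) (phiO t A) \<and> iso_arr C (Rf A t)" using Rh A by blast
    then show "tens_ars C (map (Rf A) ts) \<in> hom C (tens_obs C (map (X A) ts)) (fold_obj C phiO ts A)"
      and "iso_arr C (tens_ars C (map (Rf A) ts))"
      unfolding fold_obj_def using tens_ars_hom[of ts "Rf A" "X A" "\<lambda>t. phiO t A"]
        tens_ars_iso[of ts "Rf A" "X A" "\<lambda>t. phiO t A"] by blast+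
  qed
  have Sfacts: "S (X A) \<in> struct_arrs C \<and> S (X A) \<in> hom C (phiO g (fold_obj C phiO ts A)) (tens_obs C (map (X A) ts))"
    if A: "A \<in> ob C" for A
    using nat_famD(1,2)[OF S Xob[OF A]] src[OF A] by simp
  have ahom: "\<alpha> A \<in> hom C (phiO g (fold_obj C phiO ts A)) (fold_obj C phiO ts A) \<and> iso_arr C (\<alpha> A)"
    if A: "A \<in> ob C" for A
  proof -
    have s: "S (X A) \<in> hom C (phiO g (fold_obj C phiO ts A)) (tens_obs C (map (X A) ts))" "iso_arr C (S (X A))"
      using Sfacts[OF A] struct_iso by blast+
    show ?thesis unfolding \<alpha>_def using comp_hom[OF s(1) Rhom[OF A]] comp_iso[OF s Rhom[OF A] Riso[OF A]] by blast
  qed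
  have natl: "cp C (\<alpha> B) (phiM g (fold_arr C phiM ts f)) = cp C (fold_arr C phiM ts f) (\<alpha> A)"
    if A: "A \<in> ob C" and B: "B \<in> ob C" and f: "f \<in> hat_hom C H phiO phiM eta A B" for A B f
  proof -
    have fh: "f \<in> hom C A B" and fc: "\<And>k. k \<in> H \<Longrightarrow> cp C (phiM k f) (eta k A) = cp C (eta k B) f"
      using f unfolding hat_hom_def by auto
    have far: "f \<in> ar C" using hom_ar[OF fh] .
    define Fh where "Fh s = phiM (s \<otimes>\<^bsub>G\<^esub> h s) f" for s
    have Fhh': "\<forall>k\<in>set ts. Fh k \<in> hom C (X A k) (X B k)"
    proof
      fix k assume k: "k \<in> set ts"
      show "Fh k \<in> hom C (X A k) (X B k)" unfolding Fh_def X_def using Fhom[OF thc[OF k] fh] .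
    qed
    have Fhh: "\<forall>k\<in>set (map \<psi> ts). Fh k \<in> hom C (X A k) (X B k)" using Fhh' sk by (simp only:)
    have PF: "phiM g (fold_arr C phiM ts f) = tens_ars C (map Fh (map \<psi> ts))"
    proof -
      have "\<forall>x\<in>set (map (\<lambda>t. phiM t f) ts). x \<in> ar C"
      proof
        fix x assume "x \<in> set (map (\<lambda>t. phiM t f) ts)"
        then obtain t where t: "t \<in> set ts" "x = phiM t f" by auto
        have "t \<in> carrier G" using t tsc by auto
        then show "x \<in> ar C" using hom_ar[OF Fhom[OF _ fh]] t by simp
      qed
      then have "phiM g (fold_arr C phiM ts f) = tens_ars C (map (phiM g) (map (\<lambda>t. phiM t f) ts))"
        unfolding fold_arr_def using fun_tens_ars[OF F[OF g]] by blast
      also have "map (phiM g) (map (\<lambda>t. phiM t f) ts) = map Fh (map \<psi> ts)"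
      proof -
        have "\<forall>t\<in>set ts. phiM g (phiM t f) = Fh (\<psi> t)"
          unfolding Fh_def using H2 actM g tsc far by auto
        then show ?thesis by simp
      qed
      finally show ?thesis .
    qed
    have pw: "cp C (Rf B t) (Fh t) = cp C (phiM t f) (Rf A t)" if t: "t \<in> set ts" for t
    proof -
      have tc: "t \<in> carrier G" "h t \<in> carrier G" and hH: "h t \<in> H" using t tsc htH Hc by auto
      have eA: "eta (h t) A \<in> hom C A (phiO (h t) A)" "iso_arr C (eta (h t) A)" using etaH hH A by auto
      have eB: "eta (h t) B \<in> hom C B (phiO (h t) B)" "iso_arr C (eta (h t) B)" using etaH hH B by auto
      have pf: "phiM (h t) f \<in> hom C (phiO (h t) A) (phiO (h t) B)" using fun_hom[OF F[OF tc(2)] fh] .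
      have cn: "cp C (inv_arr C (eta (h t) B)) (phiM (h t) f) = cp C f (inv_arr C (eta (h t) A))"
        using conj_nat[OF eA eB fh pf] fc[OF hH] by simp
      have "Fh t = phiM t (phiM (h t) f)" unfolding Fh_def using actM tc far by simp
      then have "cp C (Rf B t) (Fh t) = phiM t (cp C (inv_arr C (eta (h t) B)) (phiM (h t) f))"
        unfolding Rf_def using fun_comp[OF F[OF tc(1)] pf inv_props(1)[OF eB]] by simp
      also have "\<dots> = phiM t (cp C f (inv_arr C (eta (h t) A)))" using cn by simp
      also have "\<dots> = cp C (phiM t f) (Rf A t)"
        unfolding Rf_def using fun_comp[OF F[OF tc(1)] inv_props(1)[OF eA] fh] .
      finally show ?thesis .
    qed
    have Rn: "cp C (tens_ars C (map (Rf B) ts)) (tens_ars C (map Fh ts))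
        = cp C (tens_ars C (map (\<lambda>t. phiM t f) ts)) (tens_ars C (map (Rf A) ts))"
    proof -
      have 1: "\<forall>k\<in>set ts. Fh k \<in> hom C (X A k) (X B k) \<and> Rf B k \<in> hom C (X B k) (phiO k B)"
        using Fhh' Rh B by blast
      have 2: "\<forall>k\<in>set ts. Rf A k \<in> hom C (X A k) (phiO k A) \<and> phiM k f \<in> hom C (phiO k A) (phiO k B)"
        using Rh A Fhom[OF _ fh] tsc by blast
      have m: "map (\<lambda>k. cp C (Rf B k) (Fh k)) ts = map (\<lambda>t. cp C (phiM t f) (Rf A t)) ts"
        by (rule map_cong[OF refl pw])
      show ?thesis using tens_ars_comp[OF 1] tens_ars_comp[OF 2] m by simp
    qed
    have sA: "S (X A) \<in> hom C (tens_obs C (map (X A) (map \<psi> ts))) (tens_obs C (map (X A) ts))"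
      using nat_famD(2)[OF S Xob[OF A]] .
    have sB: "S (X B) \<in> hom C (tens_obs C (map (X B) (map \<psi> ts))) (tens_obs C (map (X B) ts))"
      using nat_famD(2)[OF S Xob[OF B]] .
    have Tk: "tens_ars C (map Fh (map \<psi> ts)) \<in> hom C (tens_obs C (map (X A) (map \<psi> ts))) (tens_obs C (map (X B) (map \<psi> ts)))"
      using tens_ars_hom[OF Fhh] .
    have Tt: "tens_ars C (map Fh ts) \<in> hom C (tens_obs C (map (X A) ts)) (tens_obs C (map (X B) ts))"
      using tens_ars_hom[OF Fhh'] .
    have Fo: "fold_arr C phiM ts f \<in> hom C (fold_obj C phiO ts A) (fold_obj C phiO ts B)"
      unfolding fold_arr_def fold_obj_def using tens_ars_hom[of ts "\<lambda>t. phiM t f" "\<lambda>t. phiO t A" "\<lambda>t. phiO t B"]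
        Fhom[OF _ fh] tsc by blast
    note RA = Rhom[OF A] and RB = Rhom[OF B]
    have "cp C (\<alpha> B) (phiM g (fold_arr C phiM ts f))
       = cp C (cp C (tens_ars C (map (Rf B) ts)) (S (X B))) (tens_ars C (map Fh (map \<psi> ts)))"
      unfolding \<alpha>_def PF ..
    also have "\<dots> = cp C (tens_ars C (map (Rf B) ts)) (cp C (S (X B)) (tens_ars C (map Fh (map \<psi> ts))))"
      using assoc[OF Tk sB RB] by simp
    also have "\<dots> = cp C (tens_ars C (map (Rf B) ts)) (cp C (tens_ars C (map Fh ts)) (S (X A)))"
      using nat_famD(3)[OF S Fhh] by simp
    also have "\<dots> = cp C (cp C (tens_ars C (map (Rf B) ts)) (tens_ars C (map Fh ts))) (S (X A))"
      using assoc[OF sA Tt RB] .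
    also have "\<dots> = cp C (cp C (fold_arr C phiM ts f) (tens_ars C (map (Rf A) ts))) (S (X A))"
      using Rn unfolding fold_arr_def by simp
    also have "\<dots> = cp C (fold_arr C phiM ts f) (\<alpha> A)"
      unfolding \<alpha>_def using assoc[OF sA RA Fo] by simp
    finally show ?thesis .
  qed
  show "\<exists>(h :: 'g \<Rightarrow> 'g) (\<alpha> :: 'o \<Rightarrow> 'm).
     (\<forall>t \<in> set ts. h t \<in> H \<and> t \<otimes>\<^bsub>G\<^esub> h t \<in> (\<lambda>s. g \<otimes>\<^bsub>G\<^esub> s) ` set ts)
   \<and> (\<forall>A \<in> ob C. \<exists>\<sigma>.
        \<sigma> \<in> struct_arrs C
      \<and> \<sigma> \<in> hom C (phiO g (fold_obj C phiO ts A))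
                   (tens_obs C (map (\<lambda>t. phiO (t \<otimes>\<^bsub>G\<^esub> h t) A) ts))
      \<and> \<alpha> A = cp C (tens_ars C (map (\<lambda>t. phiM t (inv_arr C (eta (h t) A))) ts)) \<sigma>
      \<and> \<alpha> A \<in> hom C (phiO g (fold_obj C phiO ts A)) (fold_obj C phiO ts A)
      \<and> iso_arr C (\<alpha> A))
   \<and> (\<forall>A \<in> ob C. \<forall>B \<in> ob C. \<forall>f \<in> hat_hom C H phiO phiM eta A B.
        cp C (\<alpha> B) (cp C (phiM g (fold_arr C phiM ts f)) (inv_arr C (\<alpha> A)))
        = fold_arr C phiM ts f)"
  proof (rule exI[where x=h], rule exI[where x=\<alpha>], intro conjI)
    show "\<forall>t \<in> set ts. h t \<in> H \<and> t \<otimes>\<^bsub>G\<^esub> h t \<in> (\<lambda>s. g \<otimes>\<^bsub>G\<^esub> s) ` set ts" using H1 .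
  next
    show "\<forall>A \<in> ob C. \<exists>\<sigma>. \<sigma> \<in> struct_arrs C
      \<and> \<sigma> \<in> hom C (phiO g (fold_obj C phiO ts A)) (tens_obs C (map (\<lambda>t. phiO (t \<otimes>\<^bsub>G\<^esub> h t) A) ts))
      \<and> \<alpha> A = cp C (tens_ars C (map (\<lambda>t. phiM t (inv_arr C (eta (h t) A))) ts)) \<sigma>
      \<and> \<alpha> A \<in> hom C (phiO g (fold_obj C phiO ts A)) (fold_obj C phiO ts A)
      \<and> iso_arr C (\<alpha> A)"
    proof (rule ballI)
    fix A assume A: "A \<in> ob C"
    show "\<exists>\<sigma>. \<sigma> \<in> struct_arrs C
      \<and> \<sigma> \<in> hom C (phiO g (fold_obj C phiO ts A)) (tens_obs C (map (\<lambda>t. phiO (t \<otimes>\<^bsub>G\<^esub> h t) A) ts))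
      \<and> \<alpha> A = cp C (tens_ars C (map (\<lambda>t. phiM t (inv_arr C (eta (h t) A))) ts)) \<sigma>
      \<and> \<alpha> A \<in> hom C (phiO g (fold_obj C phiO ts A)) (fold_obj C phiO ts A)
      \<and> iso_arr C (\<alpha> A)"
      apply (rule exI[where x="S (X A)"])
      using Sfacts[OF A] ahom[OF A] unfolding \<alpha>_def X_def Rf_def by blast
    qed
  next
    show "\<forall>A \<in> ob C. \<forall>B \<in> ob C. \<forall>f \<in> hat_hom C H phiO phiM eta A B.
        cp C (\<alpha> B) (cp C (phiM g (fold_arr C phiM ts f)) (inv_arr C (\<alpha> A)))
        = fold_arr C phiM ts f"
    proof (intro ballI)
    fix A B f assume A: "A \<in> ob C" and B: "B \<in> ob C" and f: "f \<in> hat_hom C H phiO phiM eta A B"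
    have fh: "f \<in> hom C A B" using f unfolding hat_hom_def by auto
    have Fo: "fold_arr C phiM ts f \<in> hom C (fold_obj C phiO ts A) (fold_obj C phiO ts B)"
      unfolding fold_arr_def fold_obj_def using tens_ars_hom[of ts "\<lambda>t. phiM t f" "\<lambda>t. phiO t A" "\<lambda>t. phiO t B"]
        Fhom[OF _ fh] tsc by blast
    have PF: "phiM g (fold_arr C phiM ts f) \<in> hom C (phiO g (fold_obj C phiO ts A)) (phiO g (fold_obj C phiO ts B))"
      using fun_hom[OF F[OF g] Fo] .
    note aA = ahom[OF A] and aB = ahom[OF B]
    note ai = inv_props[OF aA[THEN conjunct1] aA[THEN conjunct2]]
    have "cp C (\<alpha> B) (cp C (phiM g (fold_arr C phiM ts f)) (inv_arr C (\<alpha> A)))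
        = cp C (cp C (\<alpha> B) (phiM g (fold_arr C phiM ts f))) (inv_arr C (\<alpha> A))"
      using assoc[OF ai(1) PF aB[THEN conjunct1]] .
    also have "\<dots> = cp C (cp C (fold_arr C phiM ts f) (\<alpha> A)) (inv_arr C (\<alpha> A))" using natl[OF A B f] by simp
    also have "\<dots> = cp C (fold_arr C phiM ts f) (cp C (\<alpha> A) (inv_arr C (\<alpha> A)))"
      using assoc[OF ai(1) aA[THEN conjunct1] Fo] by simp
    also have "\<dots> = fold_arr C phiM ts f" using ai(3) id_r[OF Fo] by simp
    finally show "cp C (\<alpha> B) (cp C (phiM g (fold_arr C phiM ts f)) (inv_arr C (\<alpha> A))) = fold_arr C phiM ts f" .
    qed
  qed
qed


end
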